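(* There is a universal constant $K_1>0$ such that for all $\alpha_m>0$, $\theta\in(0,1)$ and $h,\alpha_s,\eta>0$, the one-dimensional minimal energy satisfies \[ E^{1D}_{h,\alpha_s,\eta,\theta}\;\ge\; K_1\min\left(\alpha_m\eta^2\theta^2,\ \alpha_s^{2/3}\eta^{5/3}\frac{\theta^{5/3}}{(1-\theta)^{1/3}}\right)h . \]
   Context: Let $\mathbb T^1=\mathbb R/\mathbb Z$. Fix parameters $\alpha_m>0$ (membrane constant), $h>0$ (nondimensionalized film thickness), $\alpha_s>0$ (compliance ratio), $\eta>0$ (mismatch strain) and $\theta\in(0,1)$ (bonded fraction). The admissible class $\mathcal A^{1D}$ consists of triples $(w,u,\Omega)$ with $w\in H^1(\mathbb T^1;\mathbb R)$, $u\in H^2(\mathbb T^1;[0,\infty))$, $\Omega\subset\mathbb T^1$ closed with Lebesgue measure $|\Omega|=\theta$, and $u=0$ on $\Omega$. The energy is \[ E^{1D}[w,u,\Omega]=\alpha_m h\int_0^1\Big|w_x+\tfrac12 u_x^2-\eta\Big|^2dx+h^3\int_0^1|u_{xx}|^2dx+\alpha_s\Big(\int_\Omega|w_x|^2dx\Big)^{1/2}\Big(\int_\Omega|w|^2dx\Big)^{1/2}, \] and $E^{1D}_{h,\alpha_s,\eta,\theta}:=\inf_{(w,u,\Omega)\in\mathcal A^{1D}}E^{1D}[w,u,\Omega]$. *)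

theory Defs
  imports "HOL-Analysis.Analysis"
begin

text \<open>Functions on the torus R/Z are represented as 1-periodic functions on the real line.\<close>

definition periodic1 :: "(real \<Rightarrow> real) \<Rightarrow> bool" where
  "periodic1 f \<longleftrightarrow> (\<forall>x. f (x + 1) = f x)"

definition L2per :: "(real \<Rightarrow> real) \<Rightarrow> bool" where
  "L2per g \<longleftrightarrow> periodic1 g \<and> g absolutely_integrable_on {0..1}
                \<and> (\<lambda>x. (g x)^2) integrable_on {0..1}"

text \<open>f is in H1 of the torus (continuous representative) with weak derivative g.\<close>
definition H1per_deriv :: "(real \<Rightarrow> real) \<Rightarrow> (real \<Rightarrow> real) \<Rightarrow> bool" where
  "H1per_deriv f g \<longleftrightarrow> periodic1 f \<and> L2per g
      \<and> (\<forall>x\<in>{0..1}. f x = f 0 + integral {0..x} g)"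

text \<open>Closed subsets of the torus: closed 1-periodic subsets of R; measure taken over one period.\<close>
definition torus_closed :: "real set \<Rightarrow> bool" where
  "torus_closed S \<longleftrightarrow> closed S \<and> (\<forall>x. x \<in> S \<longleftrightarrow> x + 1 \<in> S)"

definition admissible1D ::
  "real \<Rightarrow> (real \<Rightarrow> real) \<Rightarrow> (real \<Rightarrow> real) \<Rightarrow> (real \<Rightarrow> real) \<Rightarrow> (real \<Rightarrow> real)
     \<Rightarrow> (real \<Rightarrow> real) \<Rightarrow> real set \<Rightarrow> bool" where
  "admissible1D \<theta> w wx u ux uxx \<Omega> \<longleftrightarrow>
     H1per_deriv w wx \<and> H1per_deriv u ux \<and> H1per_deriv ux uxx
     \<and> (\<forall>x. u x \<ge> 0)
     \<and> torus_closed \<Omega> \<and> measure lebesgue (\<Omega> \<inter> {0..1}) = \<theta>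
     \<and> (\<forall>x\<in>\<Omega>. u x = 0)"

definition energy1D ::
  "real \<Rightarrow> real \<Rightarrow> real \<Rightarrow> real \<Rightarrow> (real \<Rightarrow> real) \<Rightarrow> (real \<Rightarrow> real) \<Rightarrow> (real \<Rightarrow> real)
     \<Rightarrow> (real \<Rightarrow> real) \<Rightarrow> real set \<Rightarrow> real" where
  "energy1D \<alpha>m h \<alpha>s \<eta> w wx ux uxx \<Omega> =
     \<alpha>m * h * integral {0..1} (\<lambda>x. (wx x + (ux x)^2 / 2 - \<eta>)^2)
     + h^3 * integral {0..1} (\<lambda>x. (uxx x)^2)
     + \<alpha>s * sqrt (integral (\<Omega> \<inter> {0..1}) (\<lambda>x. (wx x)^2))
           * sqrt (integral (\<Omega> \<inter> {0..1}) (\<lambda>x. (w x)^2))"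

definition minE1D :: "real \<Rightarrow> real \<Rightarrow> real \<Rightarrow> real \<Rightarrow> real \<Rightarrow> real" where
  "minE1D \<alpha>m h \<alpha>s \<eta> \<theta> =
     Inf {energy1D \<alpha>m h \<alpha>s \<eta> w wx ux uxx \<Omega> | w wx u ux uxx \<Omega>.
            admissible1D \<theta> w wx u ux uxx \<Omega>}"

end

theory Submission
  imports Defs
begin
lemma absD:
  fixes f :: "real \<Rightarrow> real" and S :: "real set"
  assumes "f absolutely_integrable_on S"
  shows "f integrable_on S" "(\<lambda>x. norm (f x)) integrable_on S"
  using assms unfolding absolutely_integrable_on_def by auto

lemma H1D:
  assumes "H1per_deriv F G"
  shows "periodic1 F" "L2per G" "x \<in> {0..1} \<Longrightarrow> F x = F 0 + integral {0..x} G"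
proof -
  show "periodic1 F" by (rule assms[unfolded H1per_deriv_def, THEN conjunct1])
  show "L2per G" by (rule assms[unfolded H1per_deriv_def, THEN conjunct2, THEN conjunct1])
  show "x \<in> {0..1} \<Longrightarrow> F x = F 0 + integral {0..x} G"
    by (rule bspec[OF assms[unfolded H1per_deriv_def, THEN conjunct2, THEN conjunct2]])
qed

lemma L2per_int:
  assumes "L2per g" "0 \<le> a" "b \<le> (1::real)"
  shows "g integrable_on {a..b}" "(\<lambda>x. (g x)^2) integrable_on {a..b}"
    "(\<lambda>x. \<bar>g x\<bar>) integrable_on {a..b}" "g absolutely_integrable_on {a..b}"
proof -
  have sub: "{a..b} \<subseteq> {0..1}" using assms by auto
  have ai: "g absolutely_integrable_on {0..1}" using assms(1) unfolding L2per_def by auto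
  show "g absolutely_integrable_on {a..b}" using absolutely_integrable_on_subinterval[OF ai sub] .
  then show "g integrable_on {a..b}" by (rule absD)
  show "(\<lambda>x. \<bar>g x\<bar>) integrable_on {a..b}"
    using \<open>g absolutely_integrable_on {a..b}\<close> unfolding absolutely_integrable_on_def by auto
  show "(\<lambda>x. (g x)^2) integrable_on {a..b}"
    using integrable_on_subinterval[OF _ sub] assms(1) unfolding L2per_def by auto
qed

lemma H1_diff:
  fixes F G :: "real \<Rightarrow> real" and a b :: real
  assumes "H1per_deriv F G" "0 \<le> a" "a \<le> b" "b \<le> (1::real)"
  shows "F b - F a = integral {a..b} G"
proof -
  have "G integrable_on {0..b}" by (rule L2per_int(1)[OF H1D(2)[OF assms(1)]]) (use assms in auto)
  then have "integral {0..a} G + integral {a..b} G = integral {0..b} G"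
    using Henstock_Kurzweil_Integration.integral_combine[where f=G and a=0 and c=a and b=b] assms by auto
  moreover have "F b = F 0 + integral {0..b} G" by (rule H1D(3)[OF assms(1)]) (use assms in auto)
  moreover have "F a = F 0 + integral {0..a} G" by (rule H1D(3)[OF assms(1)]) (use assms in auto)
  ultimately show ?thesis by linarith
qed

lemma H1_cont:
  assumes "H1per_deriv F G"
  shows "continuous_on {0..1} F"
proof -
  have "G integrable_on {0..1}" by (rule L2per_int(1)[OF H1D(2)[OF assms(1)]]) auto
  then have "continuous_on {0..1} (\<lambda>x. F 0 + integral {0..x} G)"
    by (intro continuous_intros indefinite_integral_continuous_1)
  moreover have "F 0 + integral {0..x} G = F x" if "x \<in> {0..1}" for x
    using H1D(3)[OF assms that] by (rule sym)
  ultimately show ?thesis by (rule continuous_on_eq)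
qed

lemma closed_lmeas: "closed (S::real set) \<Longrightarrow> S \<inter> {a..b} \<in> lmeasurable"
  by (simp add: closed_Int_compact lmeasurable_compact)


lemma restrict_int:
  fixes g :: "real \<Rightarrow> real"
  assumes "(\<lambda>x. g x) absolutely_integrable_on {a..b}" "closed (S::real set)"
  shows "(\<lambda>x. if x \<in> S then g x else 0) integrable_on {a..b}"
proof -
  have "g absolutely_integrable_on (S \<inter> {a..b})"
  proof (rule set_integrable_subset[OF assms(1)])
    show "S \<inter> {a..b} \<in> sets lebesgue" by (rule fmeasurableD[OF closed_lmeas[OF assms(2)]])
  qed auto
  then have "g integrable_on (S \<inter> {a..b})" by (rule absD)
  then show ?thesis by (rule integrable_restrict_Int[THEN iffD2])
qed

lemma CS_int:
  fixes g :: "real \<Rightarrow> real"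
  assumes "g integrable_on {a..b}" "(\<lambda>x. (g x)^2) integrable_on {a..b}" "a \<le> b"
  shows "(integral {a..b} g)^2 \<le> (b - a) * integral {a..b} (\<lambda>x. (g x)^2)"
proof (cases "a = b")
  case True then show ?thesis by simp
next
  case False
  define I where "I = integral {a..b} g"
  define t where "t = I / (b - a)"
  have ba: "b - a > 0" using False assms by auto
  have "((\<lambda>x. (g x)^2 - 2 * t * g x + t^2) has_integral
      (integral {a..b} (\<lambda>x. (g x)^2) - 2 * t * I + t^2 * (b - a))) {a..b}"
    using assms unfolding I_def
    by (intro has_integral_add has_integral_diff has_integral_mult_right integrable_integral)
       (use has_integral_const_real[of "t^2" a b] ba in \<open>auto simp: mult.commute\<close>)
  moreover have "0 \<le> (g x)^2 - 2 * t * g x + t^2" for x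
  proof -
    have "(g x)^2 - 2 * t * g x + t^2 = (g x - t)^2" by (simp add: power2_eq_square algebra_simps)
    then show ?thesis by simp
  qed
  ultimately have "0 \<le> integral {a..b} (\<lambda>x. (g x)^2) - 2 * t * I + t^2 * (b - a)"
    using has_integral_nonneg by blast
  also have "\<dots> = integral {a..b} (\<lambda>x. (g x)^2) - I^2 / (b - a)"
  proof -
    have "2 * t * I = 2 * (I^2 / (b - a))" using ba by (simp add: t_def power2_eq_square)
    moreover have "t^2 * (b - a) = I^2 / (b - a)" using ba by (simp add: t_def power2_eq_square)
    ultimately show ?thesis by simp
  qed
  finally show ?thesis using ba unfolding I_def by (simp add: field_simps)
qed

lemma sign_right:
  assumes "H1per_deriv F G" "continuous_on {0..1} G" "\<And>x. F x \<ge> 0" "0 \<le> z" "z < 1" "F z = 0"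
  shows "G z \<ge> 0"
proof (rule ccontr)
  assume "\<not> G z \<ge> 0" hence neg: "G z < 0" by simp
  have zin: "z \<in> {0..1}" using assms by auto
  have e0: "- G z / 2 > 0" using neg by simp
  obtain d where d: "d > 0" "\<forall>x\<in>{0..1}. dist x z < d \<longrightarrow> dist (G x) (G z) < - G z / 2"
    using assms(2) zin e0 unfolding continuous_on_iff by blast
  define y where "y = min (z + d/2) 1"
  have zy: "z < y" "y \<le> 1" using d assms by (auto simp: y_def)
  have le: "G x \<le> G z / 2" if "x \<in> {z..y}" for x
  proof -
    have "x \<in> {0..1}" "dist x z < d" using that zy assms d by (auto simp: y_def dist_real_def)
    then have "dist (G x) (G z) < - G z / 2" using d by auto
    then show ?thesis unfolding dist_real_def by arith
  qed
  have "F y - F z = integral {z..y} G" using H1_diff[OF assms(1), of z y] zy assms by auto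
  also have "\<dots> \<le> integral {z..y} (\<lambda>x. G z / 2)"
    by (rule integral_le) (use L2per_int(1)[where g=G and a=z and b=y] assms zy le H1D(2)[OF assms(1)] in
        auto)
  also have "\<dots> = (y - z) * (G z / 2)" using zy by simp
  also have "\<dots> < 0" using zy neg by (simp add: mult_pos_neg)
  finally show False using assms(3)[of y] assms(6) by linarith
qed

lemma sign_left:
  assumes "H1per_deriv F G" "continuous_on {0..1} G" "\<And>x. F x \<ge> 0" "0 < z" "z \<le> 1" "F z = 0"
  shows "G z \<le> 0"
proof (rule ccontr)
  assume "\<not> G z \<le> 0" hence pos: "G z > 0" by simp
  have zin: "z \<in> {0..1}" using assms by auto
  have e0: "G z / 2 > 0" using pos by simp
  obtain d where d: "d > 0" "\<forall>x\<in>{0..1}. dist x z < d \<longrightarrow> dist (G x) (G z) < G z / 2"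
    using assms(2) zin e0 unfolding continuous_on_iff by blast
  define y where "y = max (z - d/2) 0"
  have zy: "y < z" "0 \<le> y" using d assms by (auto simp: y_def)
  have le: "G z / 2 \<le> G x" if "x \<in> {y..z}" for x
  proof -
    have "x \<in> {0..1}" "dist x z < d" using that zy assms d by (auto simp: y_def dist_real_def)
    then have "dist (G x) (G z) < G z / 2" using d by auto
    then show ?thesis unfolding dist_real_def by arith
  qed
  have "(z - y) * (G z / 2) = integral {y..z} (\<lambda>x. G z / 2)" using zy by simp
  also have "\<dots> \<le> integral {y..z} G"
    by (rule integral_le) (use L2per_int(1)[where g=G and a=y and b=z] assms zy le H1D(2)[OF assms(1)] in
        auto)
  also have "\<dots> = F z - F y" using H1_diff[OF assms(1), of y z] zy assms by auto
  finally have "(z - y) * (G z / 2) \<le> F z - F y" .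
  moreover have "0 < (z - y) * (G z / 2)" using zy pos by simp
  ultimately show False using assms(3)[of y] assms(6) by linarith
qed

locale adm =
  fixes \<theta> \<eta> :: real and w wx u ux uxx :: "real \<Rightarrow> real" and \<Omega> :: "real set"
  assumes adm: "admissible1D \<theta> w wx u ux uxx \<Omega>" and th0: "0 < \<theta>" and th1: "\<theta> < 1"
    and eta: "0 < \<eta>"
begin

lemma facts0: "H1per_deriv w wx \<and> H1per_deriv u ux \<and> H1per_deriv ux uxx \<and> (\<forall>x. u x \<ge> 0)
  \<and> (closed \<Omega> \<and> (\<forall>x. x \<in> \<Omega> \<longleftrightarrow> x + 1 \<in> \<Omega>)) \<and> measure lebesgue (\<Omega> \<inter> {0..1}) = \<theta>
  \<and> (\<forall>x\<in>\<Omega>. u x = 0)"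
  using adm unfolding admissible1D_def torus_closed_def .

lemma f1: "H1per_deriv w wx" by (rule facts0[THEN conjunct1])
lemma f2: "H1per_deriv u ux" by (rule facts0[THEN conjunct2, THEN conjunct1])
lemma f3: "H1per_deriv ux uxx" by (rule facts0[THEN conjunct2, THEN conjunct2, THEN conjunct1])
lemma f4: "u x \<ge> 0" by (rule facts0[THEN conjunct2, THEN conjunct2, THEN conjunct2, THEN conjunct1, THEN spec])
lemma f5: "closed \<Omega>" by (rule facts0[THEN conjunct2, THEN conjunct2, THEN conjunct2, THEN conjunct2, THEN conjunct1, THEN conjunct1])
lemma f6: "x \<in> \<Omega> \<longleftrightarrow> x + 1 \<in> \<Omega>" by (rule facts0[THEN conjunct2, THEN conjunct2, THEN conjunct2, THEN conjunct2, THEN conjunct1, THEN conjunct2, THEN spec])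
lemma f7: "measure lebesgue (\<Omega> \<inter> {0..1}) = \<theta>" by (rule facts0[THEN conjunct2, THEN conjunct2, THEN conjunct2, THEN conjunct2, THEN conjunct2, THEN conjunct1])
lemma f8: "x \<in> \<Omega> \<Longrightarrow> u x = 0" by (rule facts0[THEN conjunct2, THEN conjunct2, THEN conjunct2, THEN conjunct2, THEN conjunct2, THEN conjunct2, THEN bspec])
lemmas facts = f1 f2 f3 f4 f5 f6 f7 f8

definition f where "f x = wx x + (ux x)^2 / 2 - \<eta>"

lemma Om_lm: "\<Omega> \<inter> {a..b} \<in> lmeasurable" using closed_lmeas facts(5) by blast

lemma ind_int: "indicat_real \<Omega> integrable_on {a..b}"
  by (rule integrable_on_indicator[THEN iffD2, OF Om_lm])

lemma m_eq: "integral {a..b} (indicat_real \<Omega>) = measure lebesgue (\<Omega> \<inter> {a..b})"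
  by (rule integral_indicator[OF Om_lm])

lemma theta_eq: "integral {0..1} (indicat_real \<Omega>) = \<theta>" using m_eq facts(7) by simp

lemma m_ge0: "0 \<le> integral {a..b} (indicat_real \<Omega>)"
  by (rule integral_nonneg[OF ind_int]) auto

lemma m_le: assumes "a \<le> b" shows "integral {a..b} (indicat_real \<Omega>) \<le> b - a"
proof -
  have "integral {a..b} (indicat_real \<Omega>) \<le> integral {a..b} (\<lambda>x. 1::real)"
    by (rule integral_le[OF ind_int]) (auto simp: indicator_def)
  then show ?thesis using assms by simp
qed

lemma ucont: "continuous_on {0..1} ux" using H1_cont facts(3) by blast
lemma wcont: "continuous_on {0..1} w" using H1_cont facts(1) by blast

lemma ux_zero: assumes "z \<in> \<Omega>" "0 \<le> z" "z \<le> 1" shows "ux z = 0"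
proof -
  have per: "ux 1 = ux 0" using H1D(1)[OF facts(3)] unfolding periodic1_def
    by (metis add_0)
  have R: "ux y \<ge> 0" if "y \<in> \<Omega>" "0 \<le> y" "y < 1" for y
    using sign_right[OF facts(2) ucont facts(4)] that facts(8) by blast
  have L: "ux y \<le> 0" if "y \<in> \<Omega>" "0 < y" "y \<le> 1" for y
    using sign_left[OF facts(2) ucont facts(4)] that facts(8) by blast
  have h01: "0 \<in> \<Omega> \<longleftrightarrow> 1 \<in> \<Omega>" using facts(6)[of 0] by simp
  show ?thesis
  proof (cases "z = 0")
    case True
    then have "ux 0 \<ge> 0" "ux 1 \<le> 0" using R[of 0] L[of 1] assms h01 by auto
    then show ?thesis unfolding True using per by linarith
  next
    case z0: False
    show ?thesis
    proof (cases "z = 1")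
      case True
      then have "ux 0 \<ge> 0" "ux 1 \<le> 0" using R[of 0] L[of 1] assms h01 by auto
      then show ?thesis unfolding True using per by linarith
    next
      case False
      then have "ux z \<ge> 0" "ux z \<le> 0" using R[of z] L[of z] assms z0 by auto
      then show ?thesis by linarith
    qed
  qed
qed

lemma int_wx: assumes "0 \<le> a" "b \<le> 1"
  shows "wx absolutely_integrable_on {a..b}" "wx integrable_on {a..b}"
    "(\<lambda>x. (wx x)^2) integrable_on {a..b}"
  using L2per_int[OF H1D(2)[OF facts(1)], of a b] assms by auto

lemma int_uxx: assumes "0 \<le> a" "b \<le> 1"
  shows "uxx integrable_on {a..b}" "(\<lambda>x. (uxx x)^2) integrable_on {a..b}"
  using L2per_int[OF H1D(2)[OF facts(3)], of a b] assms by auto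

lemma int_ux: assumes "0 \<le> a" "b \<le> 1"
  shows "ux integrable_on {a..b}" "(\<lambda>x. (ux x)^2) integrable_on {a..b}"
  using L2per_int[OF H1D(2)[OF facts(2)], of a b] assms by auto

lemma cont_c: assumes "0 \<le> a" "b \<le> 1"
  shows "continuous_on {a..b} (\<lambda>x. (ux x)^2 / 2 - \<eta>)"
proof -
  have "continuous_on {a..b} ux" using ucont by (rule continuous_on_subset) (use assms in auto)
  then show ?thesis by (intro continuous_intros) auto
qed

lemma int_f: assumes "0 \<le> a" "b \<le> 1"
  shows "f absolutely_integrable_on {a..b}" "f integrable_on {a..b}"
    "(\<lambda>x. \<bar>f x\<bar>) integrable_on {a..b}" "(\<lambda>x. (f x)^2) integrable_on {a..b}"
proof -
  define c where "c x = (ux x)^2 / 2 - \<eta>" for x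
  have cc: "continuous_on {a..b} c" using cont_c[OF assms] by (simp add: c_def[abs_def])
  have fe: "f = (\<lambda>x. wx x + c x)" by (auto simp: f_def c_def)
  have ca: "c absolutely_integrable_on {a..b}" using absolutely_integrable_continuous_real[OF cc] .
  show fa: "f absolutely_integrable_on {a..b}" unfolding fe
    using set_integral_add(1)[OF int_wx(1)[OF assms] ca] .
  then show "f integrable_on {a..b}" by (rule absD)
  show "(\<lambda>x. \<bar>f x\<bar>) integrable_on {a..b}" using fa unfolding absolutely_integrable_on_def by auto
  have cm: "c \<in> borel_measurable (lebesgue_on {a..b})"
    by (rule continuous_imp_measurable_on_sets_lebesgue[OF cc]) auto
  have cb: "bounded (c ` {a..b})" by (rule compact_imp_bounded, rule compact_continuous_image[OF cc]) auto
  have p: "(\<lambda>x. c x * wx x) absolutely_integrable_on {a..b}"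
    by (rule absolutely_integrable_bounded_measurable_product_real[OF cm _ cb int_wx(1)[OF assms]]) auto
  have c2: "(\<lambda>x. (c x)^2) integrable_on {a..b}"
    by (rule integrable_continuous_interval) (intro continuous_intros cc)
  have i2: "(\<lambda>x. 2 * (c x * wx x)) integrable_on {a..b}"
    by (rule integrable_on_mult_right[OF absD(1)[OF p]])
  have "(\<lambda>x. (wx x)^2 + 2 * (c x * wx x)) integrable_on {a..b}"
    by (rule integrable_add[OF int_wx(3)[OF assms] i2])
  then have "(\<lambda>x. (wx x)^2 + 2 * (c x * wx x) + (c x)^2) integrable_on {a..b}"
    by (rule integrable_add[OF _ c2])
  then show "(\<lambda>x. (f x)^2) integrable_on {a..b}"
    by (rule integrable_eq) (auto simp: fe power2_eq_square algebra_simps)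
qed

lemma int_wsq: assumes "0 \<le> a" "b \<le> 1"
  shows "(\<lambda>x. if x \<in> \<Omega> then (w x)^2 else 0) integrable_on {a..b}"
    "(\<lambda>x. if x \<in> \<Omega> then (wx x)^2 else 0) integrable_on {a..b}"
proof -
  have "continuous_on {a..b} w" using wcont by (rule continuous_on_subset) (use assms in auto)
  then have cw: "continuous_on {a..b} (\<lambda>x. (w x)^2)" by (intro continuous_intros)
  show "(\<lambda>x. if x \<in> \<Omega> then (w x)^2 else 0) integrable_on {a..b}"
    by (rule restrict_int[OF absolutely_integrable_continuous_real[OF cw] facts(5)])
  have aw: "(\<lambda>x. (wx x)^2) absolutely_integrable_on {a..b}"
    by (rule nonnegative_absolutely_integrable_1[OF int_wx(3)[OF assms]]) auto
  show "(\<lambda>x. if x \<in> \<Omega> then (wx x)^2 else 0) integrable_on {a..b}"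
    by (rule restrict_int[OF aw facts(5)])
qed

end

lemma ind_interval_le:
  fixes p D a b :: real assumes "0 \<le> D"
  shows "integral {a..b} (indicat_real {p..p+D}) \<le> D"
proof -
  have "integral {a..b} (indicat_real {p..p+D}) = integral {a..b} (\<lambda>x. if x \<in> {p..p+D} then 1 else 0)"
    by (rule integral_cong) (simp add: indicator_def)
  also have "\<dots> = integral ({p..p+D} \<inter> {a..b}) (\<lambda>x. 1::real)"
    by (rule integral_restrict_Int)
  also have "\<dots> = integral {max p a..min (p+D) b} (\<lambda>x. 1::real)" by simp
  also have "\<dots> \<le> D" using assms by (cases "max p a \<le> min (p+D) b") auto
  finally show ?thesis .
qed

context adm begin

lemma ux_pt: assumes "0 \<le> a" "a \<le> x" "x \<le> b" "b \<le> 1" "a \<le> z" "z \<le> b" "z \<in> \<Omega>"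
  shows "(ux x)^2 \<le> (b - a) * integral {a..b} (\<lambda>x. (uxx x)^2)"
proof -
  define p q where "p = min x z" and "q = max x z"
  have pq: "a \<le> p" "p \<le> q" "q \<le> b" using assms by (auto simp: p_def q_def)
  have uz: "ux z = 0" using ux_zero assms by auto
  have d: "ux q - ux p = integral {p..q} uxx" using H1_diff[OF facts(3), of p q] pq assms by auto
  have "(ux x)^2 = (ux q - ux p)^2" using uz by (cases "x \<le> z") (auto simp: p_def q_def power2_commute)
  also have "\<dots> \<le> (q - p) * integral {p..q} (\<lambda>x. (uxx x)^2)"
    unfolding d by (rule CS_int) (use int_uxx[of p q] pq assms in auto)
  also have "\<dots> \<le> (b - a) * integral {a..b} (\<lambda>x. (uxx x)^2)"
  proof (rule mult_mono)
    show "integral {p..q} (\<lambda>x. (uxx x)^2) \<le> integral {a..b} (\<lambda>x. (uxx x)^2)"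
      by (rule integral_subset_le) (use int_uxx pq assms in auto)
    show "0 \<le> integral {p..q} (\<lambda>x. (uxx x)^2)"
      by (rule integral_nonneg) (use int_uxx pq assms in auto)
  qed (use pq in auto)
  finally show ?thesis .
qed

lemma U_bound: assumes "0 \<le> a" "a \<le> b" "b \<le> 1" "0 < integral {a..b} (indicat_real \<Omega>)"
  shows "integral {a..b} (\<lambda>x. (ux x)^2) \<le>
    ((b - a) - integral {a..b} (indicat_real \<Omega>)) * ((b - a) * integral {a..b} (\<lambda>x. (uxx x)^2))"
proof -
  define m C where "m = integral {a..b} (indicat_real \<Omega>)"
    and "C = (b - a) * integral {a..b} (\<lambda>x. (uxx x)^2)"
  obtain z where z: "z \<in> \<Omega>" "a \<le> z" "z \<le> b"
  proof (rule ccontr)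
    assume "\<not> thesis"
    then have "\<forall>x\<in>{a..b}. indicat_real \<Omega> x = 0" using that by (auto simp: indicator_def)
    then have "integral {a..b} (indicat_real \<Omega>) = integral {a..b} (\<lambda>x. 0::real)"
      by (intro integral_cong) auto
    then show False using assms by simp
  qed
  have pt: "(ux x)^2 \<le> (1 - indicat_real \<Omega> x) * C" if "x \<in> {a..b}" for x
  proof (cases "x \<in> \<Omega>")
    case True then show ?thesis using ux_zero that assms by auto
  next
    case False then show ?thesis using ux_pt[of a x b z] that assms z by (auto simp: C_def)
  qed
  have hi: "((\<lambda>x. (1 - indicat_real \<Omega> x) * C) has_integral ((b - a) - m) * C) {a..b}"
  proof -
    have "((\<lambda>x. 1 - indicat_real \<Omega> x) has_integral ((b - a) - m)) {a..b}"
      using has_integral_diff[OF has_integral_const_real[of "1::real" a b] integrable_integral[OF ind_int[of a b]]]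
        assms by (simp add: m_def)
    then show ?thesis using has_integral_mult_left by blast
  qed
  have "integral {a..b} (\<lambda>x. (ux x)^2) \<le> integral {a..b} (\<lambda>x. (1 - indicat_real \<Omega> x) * C)"
    by (rule integral_le) (use int_ux assms hi pt in auto)
  also have "\<dots> = ((b - a) - m) * C" using hi by (rule integral_unique)
  finally show ?thesis by (simp add: m_def C_def)
qed

lemma w_incr: assumes "0 \<le> a" "a \<le> x" "x \<le> y" "y \<le> b" "b \<le> 1"
  shows "w y - w x \<ge> \<eta> * (y - x) -
     (integral {a..b} (\<lambda>x. (ux x)^2) / 2 + integral {a..b} (\<lambda>x. \<bar>f x\<bar>))"
proof -
  have xy: "0 \<le> x" "y \<le> 1" using assms by auto
  have "w y - w x = integral {x..y} wx" using H1_diff[OF facts(1), of x y] assms by auto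
  also have "integral {x..y} wx = integral {x..y} f + \<eta> * (y - x) - (1/2) * integral {x..y} (\<lambda>t. (ux t)^2)"
  proof -
    have "((\<lambda>t. f t + \<eta> - (1/2) * (ux t)^2) has_integral
      (integral {x..y} f + \<eta> * (y - x) - (1/2) * integral {x..y} (\<lambda>t. (ux t)^2))) {x..y}"
      using has_integral_const_real[of \<eta> x y] assms int_f(2)[OF xy] int_ux(2)[OF xy]
      by (intro has_integral_diff has_integral_add has_integral_mult_right integrable_integral)
         (auto simp: mult.commute)
    moreover have "(\<lambda>t. f t + \<eta> - (1/2) * (ux t)^2) = wx" by (auto simp: f_def)
    ultimately show ?thesis using integral_unique by metis
  qed
  also have "\<dots> \<ge> - integral {a..b} (\<lambda>x. \<bar>f x\<bar>) + \<eta> * (y - x) - (1/2) * integral {a..b} (\<lambda>t. (ux t)^2)"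
  proof -
    have "integral {x..y} (\<lambda>t. - \<bar>f t\<bar>) \<le> integral {x..y} f"
      by (rule integral_le) (use int_f[OF xy] in \<open>auto intro: integrable_neg\<close>)
    moreover have "integral {x..y} (\<lambda>t. \<bar>f t\<bar>) \<le> integral {a..b} (\<lambda>t. \<bar>f t\<bar>)"
      by (rule integral_subset_le) (use int_f xy assms in auto)
    moreover have "integral {x..y} (\<lambda>t. (ux t)^2) \<le> integral {a..b} (\<lambda>t. (ux t)^2)"
      by (rule integral_subset_le) (use int_ux xy assms in auto)
    ultimately show ?thesis by simp
  qed
  finally show ?thesis by simp
qed

lemma level: assumes "0 \<le> a" "a \<le> b" "b \<le> 1"
  and e: "integral {a..b} (\<lambda>x. (ux x)^2) / 2 + integral {a..b} (\<lambda>x. \<bar>f x\<bar>)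
          \<le> \<eta> * integral {a..b} (indicat_real \<Omega>) / 4"
  shows "\<eta>^2 * (integral {a..b} (indicat_real \<Omega>))^3 / 128
      \<le> integral {a..b} (\<lambda>x. if x \<in> \<Omega> then (w x)^2 else 0)"
proof -
  define m where "m = integral {a..b} (indicat_real \<Omega>)"
  define e where "e = integral {a..b} (\<lambda>x. (ux x)^2) / 2 + integral {a..b} (\<lambda>x. \<bar>f x\<bar>)"
  define t where "t = \<eta> * m / 8"
  define D where "D = m / 2"
  have m0: "0 \<le> m" using m_ge0 by (simp add: m_def)
  have D0: "0 \<le> D" using m0 by (simp add: D_def)
  have ee: "e \<le> \<eta> * m / 4" using e by (simp add: e_def m_def)
  define S where "S = {x \<in> {a..b}. x \<in> \<Omega> \<and> \<bar>w x\<bar> < t}"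
  have close: "y - x < D" if "x \<in> S" "y \<in> S" "x < y" for x y
  proof -
    have "w y - w x \<ge> \<eta> * (y - x) - e" using w_incr[of a x y b] that assms
      by (auto simp: S_def e_def)
    moreover have "w y - w x < 2 * t" using that by (auto simp: S_def)
    ultimately have "\<eta> * (y - x) < \<eta> * D" using ee by (simp add: t_def D_def)
    then show ?thesis using eta by simp
  qed
  define p where "p = (if S = {} then a else Inf S)"
  have pS: "p \<le> y \<and> y \<le> p + D" if "y \<in> S" for y
  proof -
    have ne: "S \<noteq> {}" using that by auto
    have bb: "bdd_below S" by (rule bdd_belowI[of _ a]) (auto simp: S_def)
    have "p \<le> y" using cInf_lower[OF that bb] ne by (simp add: p_def)
    moreover have "y - D \<le> Inf S"
    proof (rule cInf_greatest[OF ne])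
      fix x assume "x \<in> S"
      then show "y - D \<le> x" using close[of x y] that D0 by (cases "x < y") auto
    qed
    ultimately show ?thesis using ne by (simp add: p_def)
  qed
  have pt: "t^2 * (indicat_real \<Omega> x - indicat_real {p..p+D} x) \<le> (if x \<in> \<Omega> then (w x)^2 else 0)"
    if "x \<in> {a..b}" for x
  proof (cases "x \<in> \<Omega>")
    case False then show ?thesis by (simp add: indicator_def)
  next
    case True
    show ?thesis
    proof (cases "\<bar>w x\<bar> < t")
      case True
      then have "x \<in> S" using \<open>x \<in> \<Omega>\<close> that by (auto simp: S_def)
      then show ?thesis using pS \<open>x \<in> \<Omega>\<close> by (simp add: indicator_def)
    next
      case False
      then have tw: "t \<le> \<bar>w x\<bar>" by simp
      have t0: "0 \<le> t" using m0 eta by (simp add: t_def)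
      have "t^2 \<le> \<bar>w x\<bar>^2" using tw t0 by (rule power_mono)
      then have "t^2 \<le> (w x)^2" by simp
      then show ?thesis using \<open>x \<in> \<Omega>\<close> by (simp add: indicator_def)
    qed
  qed
  have "t^2 * (m - D) \<le> t^2 * (m - integral {a..b} (indicat_real {p..p+D}))"
    using ind_interval_le[OF D0, of a b p] by (simp add: mult_left_mono)
  also have "\<dots> = integral {a..b} (\<lambda>x. t^2 * (indicat_real \<Omega> x - indicat_real {p..p+D} x))"
  proof -
    have "indicat_real {p..p+D} integrable_on {a..b}"
      by (simp add: integrable_on_indicator lmeasurable_compact compact_Int)
    then show ?thesis
      using integral_diff[OF ind_int[of a b]] by (simp add: m_def)
  qed
  also have "\<dots> \<le> integral {a..b} (\<lambda>x. if x \<in> \<Omega> then (w x)^2 else 0)"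
  proof (rule integral_le)
    have "indicat_real {p..p+D} integrable_on {a..b}"
      by (simp add: integrable_on_indicator lmeasurable_compact compact_Int)
    then show "(\<lambda>x. t^2 * (indicat_real \<Omega> x - indicat_real {p..p+D} x)) integrable_on {a..b}"
      by (intro integrable_on_mult_right integrable_diff ind_int)
  qed (use pt int_wsq assms in auto)
  finally show ?thesis by (simp add: t_def D_def m_def power2_eq_square power3_eq_cube field_simps)
qed

end

lemma split_int:
  fixes g :: "real \<Rightarrow> real"
  assumes "g integrable_on {0..1}" "n > 0"
  shows "integral {0..1} g = (\<Sum>k<n. integral {real k / n..real (Suc k) / n} g)"
proof -
  have "j \<le> n \<Longrightarrow> integral {0..real j / n} g = (\<Sum>k<j. integral {real k / n..real (Suc k) / n} g)" for j
  proof (induction j)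
    case 0 then show ?case by simp
  next
    case (Suc j)
    have le1: "real (Suc j) / n \<le> 1" using Suc.prems assms by (simp add: field_simps)
    have le2: "real j / n \<le> real (Suc j) / n" using assms by (simp add: divide_right_mono)
    have "g integrable_on {0..real (Suc j) / n}"
      by (rule integrable_on_subinterval[OF assms(1)]) (use le1 in auto)
    then have "integral {0..real j / n} g + integral {real j / n..real (Suc j) / n} g
        = integral {0..real (Suc j) / n} g"
      by (intro Henstock_Kurzweil_Integration.integral_combine le2) auto
    then show ?case using Suc by simp
  qed
  from this[of n] show ?thesis using assms by simp
qed

lemma half_aux: "2 * (m - q) \<le> (A::real) \<Longrightarrow> m \<le> A / 2 + q" by argo

lemma amgm_bad:
  fixes m l Bk Fk lam eta U :: real
  assumes m0: "0 \<le> m" "m \<le> l" and lam: "lam > 0" and eta: "eta > 0" and B: "0 \<le> Bk" and F: "0 \<le> Fk"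
    and bad: "\<not> (U / 2 + Fk \<le> eta * m / 4)"
    and U: "0 < m \<Longrightarrow> U \<le> (l - m) * (l * Bk)"
  shows "m \<le> (lam * (m * (l - m)) + (2 * l * Bk / eta) / lam) / 2 + 4 * Fk / eta"
proof (cases "m \<le> 4 * Fk / eta")
  case True
  have "0 \<le> lam * (m * (l - m))" using m0 lam by simp
  moreover have "0 \<le> (2 * l * Bk / eta) / lam" using m0 lam B eta by simp
  ultimately have "0 \<le> (lam * (m * (l - m)) + (2 * l * Bk / eta) / lam) / 2" by simp
  then show ?thesis using True by (rule add_increasing)
next
  case False
  define z where "z = m - 4 * Fk / eta"
  have z0: "0 < z" using False by (simp add: z_def)
  have mpos: "0 < m" using z0 F eta unfolding z_def by (smt (verit) divide_nonneg_pos)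
  define X Y where "X = m * (l - m)" and "Y = 2 * l * Bk / eta"
  have X0: "0 \<le> X" "0 \<le> Y" using m0 B eta by (auto simp: X_def Y_def)
  have "eta * m / 4 < U / 2 + Fk" using bad by simp
  then have "eta * m < 2 * U + 4 * Fk" by simp
  then have "eta * m < 2 * ((l - m) * (l * Bk)) + 4 * Fk" using U[OF mpos] by linarith
  then have "m < 2 * ((l - m) * (l * Bk)) / eta + 4 * Fk / eta" using eta
    by (simp add: field_simps)
  then have zl: "z \<le> (l - m) * Y" by (simp add: z_def Y_def field_simps)
  have zm: "z \<le> m" using F eta by (simp add: z_def)
  have "z * z \<le> m * ((l - m) * Y)" using zl zm z0 by (intro mult_mono) auto
  then have zz: "z^2 \<le> X * Y" by (simp add: X_def power2_eq_square algebra_simps)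
  have "4 * (X * Y) \<le> (lam * X + Y / lam)^2"
  proof -
    have "(lam * X + Y / lam)^2 - 4 * (X * Y) = (lam * X - Y / lam)^2"
      using lam by (simp add: power2_eq_square field_simps)
    then show ?thesis by (smt (verit) zero_le_power2)
  qed
  then have "(2 * z)^2 \<le> (lam * X + Y / lam)^2" using zz by (simp add: power2_eq_square)
  moreover have nn: "0 \<le> lam * X + Y / lam" using X0 lam by simp
  ultimately have "2 * z \<le> lam * X + Y / lam"
    by (rule power2_le_imp_le)
  then have "m \<le> (lam * X + Y / lam) / 2 + 4 * Fk / eta" unfolding z_def by (rule half_aux)
  then show ?thesis by (simp only: X_def Y_def)
qed

lemma global:
  fixes n :: nat and m B F U W :: "nat \<Rightarrow> real" and l \<theta> \<eta> Bt :: real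
  assumes n: "n > 0" and l: "l = 1 / real n"
    and m: "\<And>k. k < n \<Longrightarrow> 0 \<le> m k \<and> m k \<le> l" and msum: "(\<Sum>k<n. m k) = \<theta>"
    and th: "0 < \<theta>" "\<theta> < 1" and eta: "\<eta> > 0"
    and B: "\<And>k. k < n \<Longrightarrow> 0 \<le> B k" and Bsum: "(\<Sum>k<n. B k) = Bt" and Bt: "Bt > 0"
    and F: "\<And>k. k < n \<Longrightarrow> 0 \<le> F k" and Fsum: "(\<Sum>k<n. F k) \<le> \<eta> * \<theta> / 32"
    and U: "\<And>k. k < n \<Longrightarrow> 0 < m k \<Longrightarrow> U k \<le> (l - m k) * (l * B k)"
    and W: "\<And>k. k < n \<Longrightarrow> 0 \<le> W k"
    and WU: "\<And>k. k < n \<Longrightarrow> U k / 2 + F k \<le> \<eta> * m k / 4 \<Longrightarrow> \<eta>^2 * (m k)^3 / 128 \<le> W k"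
    and lsq: "l^2 \<le> \<eta> * \<theta> / (128 * Bt * (1 - \<theta>))"
  shows "\<eta>^2 * \<theta>^3 * l^2 / 4096 \<le> (\<Sum>k<n. W k)"
proof -
  have nl: "real n * l = 1" using n l by simp
  have l0: "l > 0" using n l by simp
  define lam where "lam = 1 / (8 * l * (1 - \<theta>))"
  have lam0: "lam > 0" using l0 th by (simp add: lam_def)
  define bad where "bad k \<longleftrightarrow> \<not> (U k / 2 + F k \<le> \<eta> * m k / 4)" for k
  define sm where "sm k \<longleftrightarrow> m k < \<theta> * l / 4" for k
  define good where "good k \<longleftrightarrow> \<not> bad k \<and> \<not> sm k" for k
  have sq: "\<theta>^2 * l \<le> (\<Sum>k<n. (m k)^2)"
  proof -
    have "0 \<le> (\<Sum>k<n. (m k - \<theta> * l)^2)" by (intro sum_nonneg) auto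
    also have "\<dots> = (\<Sum>k<n. (m k)^2) - 2 * (\<theta> * l) * (\<Sum>k<n. m k) + real n * (\<theta> * l)^2"
      by (simp add: power2_diff sum.distrib sum_subtractf sum_distrib_left sum_distrib_right algebra_simps)
    also have "\<dots> = (\<Sum>k<n. (m k)^2) - \<theta>^2 * l"
      using nl by (simp add: msum power2_eq_square algebra_simps)
    finally show ?thesis by simp
  qed
  have Xs: "(\<Sum>k<n. m k * (l - m k)) \<le> l * \<theta> * (1 - \<theta>)"
  proof -
    have "(\<Sum>k<n. m k * (l - m k)) = l * (\<Sum>k<n. m k) - (\<Sum>k<n. (m k)^2)"
      by (simp add: sum_subtractf sum_distrib_left power2_eq_square algebra_simps)
    then show ?thesis using sq msum by (simp add: algebra_simps power2_eq_square)
  qed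
  have badpt: "(if bad k then m k else 0) \<le>
      (lam * (m k * (l - m k)) + (2 * l * B k / \<eta>) / lam) / 2 + 4 * F k / \<eta>" if "k < n" for k
  proof (cases "bad k")
    case True
    then show ?thesis using amgm_bad[of "m k" l lam \<eta> "B k" "F k" "U k"] m[OF that] lam0 eta B[OF that]
        F[OF that] U[OF that] by (simp add: bad_def)
  next
    case False
    have "0 \<le> lam * (m k * (l - m k))" using m[OF that] lam0 by simp
    moreover have "0 \<le> (2 * l * B k / \<eta>) / lam" using B[OF that] lam0 eta l0 by simp
    moreover have "0 \<le> 4 * F k / \<eta>" using F[OF that] eta by simp
    ultimately show ?thesis using False by simp
  qed
  have badsum: "(\<Sum>k<n. if bad k then m k else 0) \<le> \<theta> / 4"
  proof -
    have "(\<Sum>k<n. if bad k then m k else 0) \<le>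
        (\<Sum>k<n. (lam * (m k * (l - m k)) + (2 * l * B k / \<eta>) / lam) / 2 + 4 * F k / \<eta>)"
      using badpt by (intro sum_mono) auto
    also have "\<dots> = lam / 2 * (\<Sum>k<n. m k * (l - m k)) + l / (\<eta> * lam) * (\<Sum>k<n. B k)
        + 4 / \<eta> * (\<Sum>k<n. F k)"
    proof -
      have pt: "(lam * (m k * (l - m k)) + (2 * l * B k / \<eta>) / lam) / 2 + 4 * F k / \<eta>
          = lam / 2 * (m k * (l - m k)) + l / (\<eta> * lam) * B k + 4 / \<eta> * F k" for k
        using lam0 eta by (simp add: field_simps)
      show ?thesis unfolding pt by (simp add: sum.distrib sum_distrib_left)
    qed
    also have "\<dots> \<le> lam / 2 * (l * \<theta> * (1 - \<theta>)) + l / (\<eta> * lam) * Bt + 4 / \<eta> * (\<eta> * \<theta> / 32)"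
      using Xs Fsum lam0 eta l0 Bsum by (intro add_mono mult_left_mono) auto
    also have "lam / 2 * (l * \<theta> * (1 - \<theta>)) = \<theta> / 16" using l0 th by (simp add: lam_def field_simps)
    also have "l / (\<eta> * lam) * Bt = l^2 * (8 * ((1 - \<theta>) * Bt / \<eta>))"
      using l0 th by (simp add: lam_def field_simps power2_eq_square)
    also have "\<dots> \<le> (\<eta> * \<theta> / (128 * Bt * (1 - \<theta>))) * (8 * ((1 - \<theta>) * Bt / \<eta>))"
    proof (rule mult_right_mono[OF lsq])
      show "0 \<le> 8 * ((1 - \<theta>) * Bt / \<eta>)" using th Bt eta by simp
    qed
    also have "\<dots> = \<theta> / 16" using th Bt eta by (simp add: field_simps)
    also have "4 / \<eta> * (\<eta> * \<theta> / 32) = \<theta> / 8" using eta by simp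
    finally show ?thesis by simp
  qed
  have smsum: "(\<Sum>k<n. if sm k then m k else 0) \<le> \<theta> / 4"
  proof -
    have "(\<Sum>k<n. if sm k then m k else 0) \<le> (\<Sum>k<n. \<theta> * l / 4)"
      using th l0 by (intro sum_mono) (auto simp: sm_def)
    also have "\<dots> = \<theta> / 4" using nl by simp
    finally show ?thesis .
  qed
  have goodsum: "\<theta> / 2 \<le> (\<Sum>k<n. if good k then m k else 0)"
  proof -
    have "\<theta> \<le> (\<Sum>k<n. (if good k then m k else 0) + (if bad k then m k else 0) + (if sm k then m k else 0))"
      unfolding msum[symmetric] using m by (intro sum_mono) (auto simp: good_def)
    also have "\<dots> = (\<Sum>k<n. if good k then m k else 0) + (\<Sum>k<n. if bad k then m k else 0)
        + (\<Sum>k<n. if sm k then m k else 0)" by (simp add: sum.distrib)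
    finally show ?thesis using badsum smsum by linarith
  qed
  define c where "c = \<eta>^2 * \<theta>^2 * l^2 / 2048"
  have c0: "0 \<le> c" by (simp add: c_def)
  have Wpt: "c * (if good k then m k else 0) \<le> W k" if "k < n" for k
  proof (cases "good k")
    case True
    then have mm: "\<theta> * l / 4 \<le> m k" and nb: "\<not> bad k" by (auto simp: good_def sm_def)
    have Wk: "\<eta>^2 * (m k)^3 / 128 \<le> W k" using WU[OF that] nb by (simp add: bad_def)
    have "(\<theta> * l / 4)^2 \<le> (m k)^2" using mm th l0 by (intro power_mono) auto
    then have "m k * (\<theta> * l / 4)^2 \<le> m k * (m k)^2" using m[OF that] by (intro mult_left_mono) auto
    then have "\<eta>^2 * (m k * (\<theta> * l / 4)^2) \<le> \<eta>^2 * (m k * (m k)^2)"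
      by (rule mult_left_mono) simp
    then have "\<eta>^2 * (m k * (\<theta> * l / 4)^2) / 128 \<le> \<eta>^2 * (m k * (m k)^2) / 128"
      by (rule divide_right_mono) simp
    then show ?thesis using True Wk by (simp add: c_def power2_eq_square power3_eq_cube field_simps)
  next
    case False then show ?thesis using W[OF that] by simp
  qed
  have "\<eta>^2 * \<theta>^3 * l^2 / 4096 = c * (\<theta> / 2)" by (simp add: c_def power2_eq_square power3_eq_cube)
  also have "\<dots> \<le> c * (\<Sum>k<n. if good k then m k else 0)" using goodsum c0 by (rule mult_left_mono)
  also have "\<dots> = (\<Sum>k<n. c * (if good k then m k else 0))" by (simp add: sum_distrib_left)
  also have "\<dots> \<le> (\<Sum>k<n. W k)" using Wpt by (intro sum_mono) auto
  finally show ?thesis .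
qed

lemma powr_cube:
  fixes a r :: real assumes "0 < a"
  shows "(a powr r)^3 = a powr (3 * r)"
proof -
  have "(a powr r)^3 = a powr (real 3 * r)" by (rule powr_power) (use assms in simp)
  then show ?thesis by simp
qed

lemma cube_Bs:
  fixes a b c d :: real assumes "0 < a" "0 < b" "0 < c" "0 < d"
  shows "(a powr (2/3) * b powr (5/3) * c powr (5/3) / d powr (1/3))^3 = a^2 * b^5 * c^5 / d"
proof -
  have "(a powr (2/3))^3 = a powr 2" using powr_cube[OF assms(1), of "2/3"] by simp
  also have "\<dots> = a^2" using assms(1) by simp
  finally have A: "(a powr (2/3))^3 = a^2" .
  have "(b powr (5/3))^3 = b powr 5" using powr_cube[OF assms(2), of "5/3"] by simp
  also have "\<dots> = b^5" using assms(2) by simp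
  finally have B: "(b powr (5/3))^3 = b^5" .
  have "(c powr (5/3))^3 = c powr 5" using powr_cube[OF assms(3), of "5/3"] by simp
  also have "\<dots> = c^5" using assms(3) by simp
  finally have C: "(c powr (5/3))^3 = c^5" .
  have D: "(d powr (1/3))^3 = d" using powr_cube[OF assms(4), of "1/3"] assms(4) by simp
  have "(a powr (2/3) * b powr (5/3) * c powr (5/3) / d powr (1/3))^3
      = (a powr (2/3))^3 * (b powr (5/3))^3 * (c powr (5/3))^3 / (d powr (1/3))^3"
    by (simp only: power_mult_distrib power_divide)
  then show ?thesis by (simp only: A B C D)
qed

context adm begin

lemma wx_int: assumes "0 \<le> x" "x \<le> y" "y \<le> 1"
  shows "integral {x..y} wx = integral {x..y} f + \<eta> * (y - x) - (1/2) * integral {x..y} (\<lambda>t. (ux t)^2)"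
proof -
  have xy: "0 \<le> x" "y \<le> 1" using assms by auto
  have "((\<lambda>t. f t + \<eta> - (1/2) * (ux t)^2) has_integral
    (integral {x..y} f + \<eta> * (y - x) - (1/2) * integral {x..y} (\<lambda>t. (ux t)^2))) {x..y}"
    using has_integral_const_real[of \<eta> x y] assms int_f(2)[OF xy] int_ux(2)[OF xy]
    by (intro has_integral_diff has_integral_add has_integral_mult_right integrable_integral)
       (auto simp: mult.commute)
  moreover have "(\<lambda>t. f t + \<eta> - (1/2) * (ux t)^2) = wx" by (auto simp: f_def)
  ultimately show ?thesis using integral_unique by metis
qed

lemma main_bound:
  fixes \<alpha>m h \<alpha>s :: real
  assumes am: "\<alpha>m > 0" and h: "h > 0" and as: "\<alpha>s > 0"
  shows "(1/1024) * min (\<alpha>m * \<eta>^2 * \<theta>^2)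
     (\<alpha>s powr (2/3) * \<eta> powr (5/3) * \<theta> powr (5/3) / (1 - \<theta>) powr (1/3)) * h
     \<le> energy1D \<alpha>m h \<alpha>s \<eta> w wx ux uxx \<Omega>"
proof -
  define M where "M = integral {0..1} (\<lambda>x. (f x)^2)"
  define Bt where "Bt = integral {0..1} (\<lambda>x. (uxx x)^2)"
  define Iw where "Iw = integral (\<Omega> \<inter> {0..1}) (\<lambda>x. (wx x)^2)"
  define Iw0 where "Iw0 = integral (\<Omega> \<inter> {0..1}) (\<lambda>x. (w x)^2)"
  define E where "E = energy1D \<alpha>m h \<alpha>s \<eta> w wx ux uxx \<Omega>"
  define Bs where "Bs = \<alpha>s powr (2/3) * \<eta> powr (5/3) * \<theta> powr (5/3) / (1 - \<theta>) powr (1/3)"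
  define A where "A = \<alpha>m * \<eta>^2 * \<theta>^2"
  have Edef: "E = \<alpha>m * h * M + h^3 * Bt + \<alpha>s * sqrt Iw * sqrt Iw0"
    unfolding E_def energy1D_def M_def Bt_def Iw_def Iw0_def f_def by simp
  have M0: "0 \<le> M" unfolding M_def by (rule integral_nonneg) (use int_f in auto)
  have B0: "0 \<le> Bt" unfolding Bt_def by (rule integral_nonneg) (use int_uxx in auto)
  have t1: "0 \<le> \<alpha>m * h * M" using am h M0 by simp
  have t2: "0 \<le> h^3 * Bt" using h B0 by simp
  have Iwn: "0 \<le> Iw"
  proof -
    have "Iw = integral {0..1} (\<lambda>x. if x \<in> \<Omega> then (wx x)^2 else 0)"
      unfolding Iw_def by (rule integral_restrict_Int[symmetric])
    also have "\<dots> \<ge> 0" by (rule integral_nonneg[OF int_wsq(2)[of 0 1]]) auto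
    finally show ?thesis .
  qed
  have Iw0n: "0 \<le> Iw0"
  proof -
    have "Iw0 = integral {0..1} (\<lambda>x. if x \<in> \<Omega> then (w x)^2 else 0)"
      unfolding Iw0_def by (rule integral_restrict_Int[symmetric])
    also have "\<dots> \<ge> 0" by (rule integral_nonneg[OF int_wsq(1)[of 0 1]]) auto
    finally show ?thesis .
  qed
  have t3: "0 \<le> \<alpha>s * sqrt Iw * sqrt Iw0" using as Iwn Iw0n by simp
  show ?thesis
  proof (cases "M > \<eta>^2 * \<theta>^2 / 1024")
    case True
    have "(1/1024) * min A Bs * h \<le> (1/1024) * A * h"
      using h by (intro mult_right_mono mult_left_mono) auto
    also have "\<dots> = \<alpha>m * h * (\<eta>^2 * \<theta>^2 / 1024)" by (simp add: A_def)
    also have "\<dots> \<le> \<alpha>m * h * M" using True am h by (intro mult_left_mono) auto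
    also have "\<dots> \<le> E" using Edef t2 t3 by linarith
    finally show ?thesis by (simp add: E_def A_def Bs_def)
  next
    case False
    then have Msm: "M \<le> \<eta>^2 * \<theta>^2 / 1024" by simp
    define c where "c = \<eta> * \<theta> / 32"
    have c0: "c > 0" using eta th0 by (simp add: c_def)
    define \<phi> where "\<phi> = integral {0..1} (\<lambda>x. \<bar>f x\<bar>)"
    have phi: "\<phi> \<le> c"
    proof -
      have hi: "((\<lambda>x. ((f x)^2 / c + c) / 2) has_integral (M / c + c) / 2) {0..1}"
        using has_integral_const_real[of c 0 1] int_f(4)[of 0 1] unfolding M_def
        by (intro has_integral_divide has_integral_add integrable_integral) auto
      have "\<phi> \<le> integral {0..1} (\<lambda>x. ((f x)^2 / c + c) / 2)"
        unfolding \<phi>_def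
      proof (rule integral_le)
        show "(\<lambda>x. ((f x)^2 / c + c) / 2) integrable_on {0..1}"
          using hi by (rule has_integral_integrable)
        show "\<bar>f x\<bar> \<le> ((f x)^2 / c + c) / 2" for x
        proof -
          have "0 \<le> (\<bar>f x\<bar> - c)^2" by simp
          then have "2 * c * \<bar>f x\<bar> \<le> (f x)^2 + c^2" by (simp add: power2_eq_square algebra_simps)
          then show ?thesis using c0 by (simp add: field_simps power2_eq_square)
        qed
      qed (use int_f in auto)
      also have "\<dots> = (M / c + c) / 2" using hi by (rule integral_unique)
      also have "\<dots> \<le> (c^2 / c + c) / 2"
      proof -
        have "c^2 = \<eta>^2 * \<theta>^2 / 1024" by (simp add: c_def power_divide power_mult_distrib)
        then have "M \<le> c^2" using Msm by simp
        then have "M / c \<le> c^2 / c" using c0 by (simp add: divide_right_mono)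
        then show ?thesis by argo
      qed
      also have "\<dots> = c" using c0 by (simp add: power2_eq_square)
      finally show ?thesis .
    qed
    define Iux where "Iux = integral {0..1} (\<lambda>x. (ux x)^2)"
    have Iux: "\<eta> \<le> Iux"
    proof -
      have "w 1 - w 0 = 0" using H1D(1)[OF facts(1)] unfolding periodic1_def by (metis add_0 diff_self)
      moreover have "w 1 - w 0 = integral {0..1} wx" using H1_diff[OF facts(1), of 0 1] by simp
      moreover have "integral {0..1} wx = integral {0..1} f + \<eta> - (1/2) * Iux"
        using wx_int[of 0 1] by (simp add: Iux_def)
      moreover have "- \<phi> \<le> integral {0..1} f"
      proof -
        have "integral {0..1} (\<lambda>t. - \<bar>f t\<bar>) \<le> integral {0..1} f"
          by (rule integral_le) (use int_f[of 0 1] in \<open>auto intro: integrable_neg\<close>)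
        then show ?thesis by (simp add: \<phi>_def)
      qed
      moreover have "\<phi> \<le> \<eta> / 32"
      proof -
        have "\<eta> * \<theta> \<le> \<eta> * 1" using th1 eta by (intro mult_left_mono) auto
        then show ?thesis using phi by (simp add: c_def)
      qed
      ultimately show ?thesis using eta by argo
    qed
    have th_int: "integral {0..1} (indicat_real \<Omega>) = \<theta>" by (rule theta_eq)
    have Ub: "Iux \<le> (1 - \<theta>) * (1 * Bt)"
      using U_bound[of 0 1] th_int th0 by (simp add: Iux_def Bt_def)
    have BtB: "\<eta> \<le> (1 - \<theta>) * Bt" using Iux Ub by simp
    have Btpos: "Bt > 0"
    proof (rule ccontr)
      assume "\<not> Bt > 0"
      then have "(1 - \<theta>) * Bt \<le> 0" using th1 by (simp add: mult_nonneg_nonpos)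
      then show False using BtB eta by linarith
    qed
    define R where "R = 128 * Bt * (1 - \<theta>) / (\<eta> * \<theta>)"
    have R1: "1 \<le> R"
    proof -
      have a: "\<eta> * \<theta> \<le> \<eta> * 1" using th1 eta by (intro mult_left_mono) auto
      have "\<eta> * \<theta> \<le> 128 * ((1 - \<theta>) * Bt)" using a BtB eta by linarith
      then show ?thesis using eta th0 by (simp add: R_def field_simps)
    qed
    define n where "n = nat \<lceil>sqrt R\<rceil>"
    have sR: "1 \<le> sqrt R" using R1 by simp
    have nge: "sqrt R \<le> real n" unfolding n_def by (simp add: real_nat_ceiling_ge)
    have nle: "real n \<le> 2 * sqrt R"
    proof -
      have m1: "-1 < sqrt R" using sR by linarith
      have c0: "0 \<le> \<lceil>sqrt R\<rceil>" using m1 by simp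
      have "real n = real_of_int \<lceil>sqrt R\<rceil>" unfolding n_def using c0 by simp
      moreover have "real_of_int \<lceil>sqrt R\<rceil> - 1 < sqrt R" using ceiling_correct[of "sqrt R"] by blast
      ultimately show ?thesis using sR by linarith
    qed
    have n1: "1 \<le> real n" using nge sR by linarith
    have npos: "n > 0" using n1 by simp
    define l where "l = 1 / real n"
    have l0: "l > 0" using npos by (simp add: l_def)
    have lsqn: "l^2 = 1 / (real n)^2" by (simp add: l_def power_divide)
    have R0: "0 < R" using R1 by simp
    have lsq: "l^2 \<le> \<eta> * \<theta> / (128 * Bt * (1 - \<theta>))"
    proof -
      have "(sqrt R)^2 \<le> (real n)^2" using nge sR by (intro power_mono) auto
      then have Rn: "R \<le> (real n)^2" using R0 by simp
      have "1 / (real n)^2 \<le> 1 / R" by (rule divide_left_mono[OF Rn]) (use R0 npos in auto)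
      moreover have "1 / R = \<eta> * \<theta> / (128 * Bt * (1 - \<theta>))" by (simp add: R_def)
      ultimately show ?thesis using lsqn by simp
    qed
    have lge: "1 / (4 * R) \<le> l^2"
    proof -
      have "(real n)^2 \<le> (2 * sqrt R)^2" using nle by (intro power_mono) auto
      also have "\<dots> = 4 * R" using R0 by (simp add: power_mult_distrib)
      finally have "(real n)^2 \<le> 4 * R" .
      then have "1 / (4 * R) \<le> 1 / (real n)^2" by (rule divide_left_mono) (use R0 npos in auto)
      then show ?thesis using lsqn by simp
    qed
    define J0 J1 where "J0 k = real k / n" and "J1 k = real (Suc k) / n" for k
    have Jk: "0 \<le> J0 k" "J0 k \<le> J1 k" "J1 k - J0 k = l" for k
    proof -
      show "0 \<le> J0 k" by (simp add: J0_def)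
      show "J0 k \<le> J1 k" unfolding J0_def J1_def by (rule divide_right_mono) auto
      show "J1 k - J0 k = l" unfolding J0_def J1_def l_def by (simp add: diff_divide_distrib[symmetric])
    qed
    have Jk1: "J1 k \<le> 1" if "k < n" for k
    proof -
      have "real (Suc k) \<le> real n" using that by simp
      then have "real (Suc k) / real n \<le> real n / real n" by (rule divide_right_mono) simp
      then show ?thesis using npos by (simp add: J1_def)
    qed
    define mm BB FF UU WW where "mm k = integral {J0 k..J1 k} (indicat_real \<Omega>)"
      and "BB k = integral {J0 k..J1 k} (\<lambda>x. (uxx x)^2)"
      and "FF k = integral {J0 k..J1 k} (\<lambda>x. \<bar>f x\<bar>)"
      and "UU k = integral {J0 k..J1 k} (\<lambda>x. (ux x)^2)"
      and "WW k = integral {J0 k..J1 k} (\<lambda>x. if x \<in> \<Omega> then (w x)^2 else 0)" for k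
    have Wsum: "\<eta>^2 * \<theta>^3 * l^2 / 4096 \<le> (\<Sum>k<n. WW k)"
    proof (rule global[where m=mm and B=BB and F=FF and U=UU and W=WW and Bt=Bt])
      show "n > 0" by (rule npos)
      show "l = 1 / real n" by (simp add: l_def)
      show "0 \<le> mm k \<and> mm k \<le> l" if "k < n" for k
        using m_ge0 m_le[of "J0 k" "J1 k"] Jk[of k] by (simp add: mm_def)
      show "(\<Sum>k<n. mm k) = \<theta>"
        using split_int[OF ind_int npos] th_int by (simp add: mm_def J0_def J1_def)
      show "0 < \<theta>" "\<theta> < 1" "\<eta> > 0" using th0 th1 eta by auto
      show "0 \<le> BB k" if "k < n" for k
        unfolding BB_def by (rule integral_nonneg) (use int_uxx Jk Jk1 that in auto)
      show "(\<Sum>k<n. BB k) = Bt"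
        using split_int[OF int_uxx(2)[of 0 1] npos] by (simp add: BB_def Bt_def J0_def J1_def)
      show "Bt > 0" by (rule Btpos)
      show "0 \<le> FF k" if "k < n" for k
        unfolding FF_def by (rule integral_nonneg) (use int_f Jk Jk1 that in auto)
      show "(\<Sum>k<n. FF k) \<le> \<eta> * \<theta> / 32"
        using split_int[OF int_f(3)[of 0 1] npos] phi by (simp add: FF_def \<phi>_def J0_def J1_def c_def)
      show "UU k \<le> (l - mm k) * (l * BB k)" if "k < n" "0 < mm k" for k
        using U_bound[of "J0 k" "J1 k"] Jk[of k] Jk1[OF that(1)] that(2)
        by (simp add: UU_def mm_def BB_def)
      show "0 \<le> WW k" if "k < n" for k
        unfolding WW_def by (rule integral_nonneg) (use int_wsq Jk Jk1 that in auto)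
      show "\<eta>^2 * (mm k)^3 / 128 \<le> WW k" if "k < n" "UU k / 2 + FF k \<le> \<eta> * mm k / 4" for k
        using level[of "J0 k" "J1 k"] Jk[of k] Jk1[OF that(1)] that(2)
        by (simp add: UU_def FF_def mm_def WW_def)
      show "l^2 \<le> \<eta> * \<theta> / (128 * Bt * (1 - \<theta>))" by (rule lsq)
    qed
    have W0: "\<eta>^2 * \<theta>^3 * l^2 / 4096 \<le> Iw0"
    proof -
      have "(\<Sum>k<n. WW k) = integral {0..1} (\<lambda>x. if x \<in> \<Omega> then (w x)^2 else 0)"
        using split_int[OF int_wsq(1)[of 0 1] npos] by (simp add: WW_def J0_def J1_def)
      also have "\<dots> = Iw0" unfolding Iw0_def by (rule integral_restrict_Int)
      finally show ?thesis using Wsum by simp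
    qed
    have W1: "\<eta>^2 * \<theta> / 4 \<le> Iw"
    proof -
      have "integral {0..1} (\<lambda>x. (\<eta>^2 / 2) * indicat_real \<Omega> x - (f x)^2)
          \<le> integral {0..1} (\<lambda>x. if x \<in> \<Omega> then (wx x)^2 else 0)"
      proof (rule integral_le)
        show "(\<lambda>x. (\<eta>^2 / 2) * indicat_real \<Omega> x - (f x)^2) integrable_on {0..1}"
          using int_f(4)[of 0 1] by (intro integrable_diff integrable_on_mult_right ind_int) auto
        show "(\<eta>^2 / 2) * indicat_real \<Omega> x - (f x)^2 \<le> (if x \<in> \<Omega> then (wx x)^2 else 0)"
          if "x \<in> {0..1}" for x
        proof (cases "x \<in> \<Omega>")
          case True
          then have "ux x = 0" using ux_zero that by auto
          then have fx: "f x = wx x - \<eta>" by (simp add: f_def)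
          have "0 \<le> (2 * wx x - \<eta>)^2" by simp
          then have "\<eta>^2 / 2 - (wx x - \<eta>)^2 \<le> (wx x)^2" by (simp add: power2_eq_square algebra_simps)
          then show ?thesis using True fx by simp
        next
          case False then show ?thesis by simp
        qed
      qed (use int_wsq(2)[of 0 1] in auto)
      also have "\<dots> = Iw" unfolding Iw_def by (rule integral_restrict_Int)
      also have "integral {0..1} (\<lambda>x. (\<eta>^2 / 2) * indicat_real \<Omega> x - (f x)^2) = \<eta>^2 / 2 * \<theta> - M"
      proof -
        have "((\<lambda>x. (\<eta>^2 / 2) * indicat_real \<Omega> x - (f x)^2) has_integral (\<eta>^2 / 2 * \<theta> - M)) {0..1}"
          using integrable_integral[OF ind_int[of 0 1]] th_int int_f(4)[of 0 1] unfolding M_def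
          by (intro has_integral_diff has_integral_mult_right integrable_integral) auto
        then show ?thesis by (rule integral_unique)
      qed
      finally have "\<eta>^2 / 2 * \<theta> - M \<le> Iw" .
      moreover have "M \<le> \<eta>^2 * \<theta> / 4"
      proof -
        have "\<eta>^2 * \<theta>^2 / 1024 \<le> \<eta>^2 * \<theta> / 4" using th0 th1
          by (intro divide_mono mult_left_mono) (auto simp: power2_eq_square mult_le_cancel_left1)
        then show ?thesis using Msm by simp
      qed
      ultimately show ?thesis by simp
    qed
    define X where "X = \<alpha>s * (\<eta>^2 * \<theta>^2 * l / 128)"
    have X0: "0 \<le> X" using as eta th0 l0 by (simp add: X_def)
    have EX: "X \<le> E"
    proof -
      have "(\<eta>^2 * \<theta>^2 * l / 128)^2 = (\<eta>^2 * \<theta> / 4) * (\<eta>^2 * \<theta>^3 * l^2 / 4096)"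
        by (simp add: power2_eq_square power3_eq_cube field_simps)
      also have "\<dots> \<le> Iw * Iw0" using W0 W1 eta th0 Iwn Iw0n by (intro mult_mono) auto
      finally have "sqrt ((\<eta>^2 * \<theta>^2 * l / 128)^2) \<le> sqrt (Iw * Iw0)" by (rule real_sqrt_le_mono)
      then have "\<eta>^2 * \<theta>^2 * l / 128 \<le> sqrt Iw * sqrt Iw0" using eta th0 l0 by (simp add: real_sqrt_mult)
      then have "X \<le> \<alpha>s * (sqrt Iw * sqrt Iw0)" unfolding X_def using as by (intro mult_left_mono) auto
      then show ?thesis using Edef t1 t2 by (simp add: mult.assoc)
    qed
    have EB: "h^3 * Bt \<le> E" using Edef t1 t3 by linarith
    have E0: "0 \<le> E" using EX X0 by linarith
    define T where "T = Bs * h / 256"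
    have Bs0: "0 < Bs" using as eta th0 th1 by (simp add: Bs_def)
    have T0: "0 \<le> T" using Bs0 h by (simp add: T_def)
    have "T^3 \<le> E^3"
    proof -
      have cube: "Bs^3 = \<alpha>s^2 * \<eta>^5 * \<theta>^5 / (1 - \<theta>)"
        unfolding Bs_def by (rule cube_Bs) (use as eta th0 th1 in auto)
      have "X^2 \<le> E^2" using EX X0 by (intro power_mono) auto
      have "X^2 = \<alpha>s^2 * \<eta>^4 * \<theta>^4 * l^2 / 16384" by (simp add: X_def power2_eq_square eval_nat_numeral algebra_simps)
      also have "\<dots> \<ge> \<alpha>s^2 * \<eta>^4 * \<theta>^4 * (1 / (4 * R)) / 16384"
        using lge by (intro divide_right_mono mult_left_mono) auto
      finally have X2: "\<alpha>s^2 * \<eta>^4 * \<theta>^4 * (1 / (4 * R)) / 16384 \<le> E^2"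
        using \<open>X^2 \<le> E^2\<close> by linarith
      define P where "P = h^3 * \<alpha>s^2 * \<eta>^4 * \<theta>^4"
      define Q where "Q = \<eta> * \<theta> / (1 - \<theta>)"
      have PQ: "0 \<le> P * Q" using h as eta th0 th1 by (simp add: P_def Q_def)
      have "T^3 = \<alpha>s^2 * \<eta>^5 * \<theta>^5 / (1 - \<theta>) * h^3 / 16777216"
        unfolding T_def by (simp add: power_mult_distrib power_divide cube)
      also have "\<dots> = P * Q / 16777216" using th1 by (simp add: P_def Q_def field_simps eval_nat_numeral)
      also have "\<dots> \<le> P * Q / 8388608" using PQ by (simp add: divide_left_mono)
      also have "\<dots> = (h^3 * Bt) * (\<alpha>s^2 * \<eta>^4 * \<theta>^4 * (1 / (4 * R)) / 16384)"
      proof -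
        have r: "Bt * (1 / (4 * R)) = Q / 512" using Btpos th0 th1 eta by (simp add: R_def Q_def field_simps)
        have "(h^3 * Bt) * (\<alpha>s^2 * \<eta>^4 * \<theta>^4 * (1 / (4 * R)) / 16384)
            = P * (Bt * (1 / (4 * R))) / 16384" by (simp add: P_def field_simps)
        also have "\<dots> = P * (Q / 512) / 16384" by (simp only: r)
        also have "\<dots> = P * Q / 8388608" by simp
        finally show ?thesis by simp
      qed
      also have "\<dots> \<le> E * E^2"
      proof -
        have "0 \<le> \<alpha>s^2 * \<eta>^4 * \<theta>^4 * (1 / (4 * R)) / 16384" using R0 by simp
        then show ?thesis using EB X2 t2 E0 by (intro mult_mono) auto
      qed
      also have "\<dots> = E^3" by (simp add: power2_eq_square power3_eq_cube)
      finally show ?thesis .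
    qed
    then have TE: "T \<le> E" using E0 power_le_imp_le_base[of T 2 E] by simp
    have "(1/1024) * min A Bs * h \<le> (1/1024) * Bs * h"
      using h by (intro mult_right_mono mult_left_mono) auto
    also have "\<dots> \<le> T" using Bs0 h by (simp add: T_def)
    finally show ?thesis using TE by (simp add: E_def A_def Bs_def)
  qed
qed

end

lemma meas_Icc: "(a::real) \<le> b \<Longrightarrow> measure lebesgue {a..b} = b - a"
  by (simp add: lmeasure_integral lmeasurable_compact)

lemma exists_adm:
  fixes \<theta> :: real assumes th: "0 < \<theta>" "\<theta> < 1"
  shows "\<exists>w wx u ux uxx \<Omega>. admissible1D \<theta> w wx u ux uxx \<Omega>"
proof -
  define \<Omega> where "\<Omega> = {x::real. cos (pi * \<theta>) \<le> cos (2 * pi * x)}"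
  have H0: "H1per_deriv (\<lambda>x. 0) (\<lambda>x. 0)"
    by (simp add: H1per_deriv_def L2per_def periodic1_def integrable_0)
  have cl: "closed \<Omega>" unfolding \<Omega>_def
    by (intro closed_Collect_le continuous_intros)
  have per: "x \<in> \<Omega> \<longleftrightarrow> x + 1 \<in> \<Omega>" for x
  proof -
    have "cos (2 * pi * (x + 1)) = cos (2 * pi * x + 2 * pi)" by (simp add: distrib_left)
    then show ?thesis unfolding \<Omega>_def by simp
  qed
  have key: "x \<in> \<Omega> \<longleftrightarrow> x \<le> \<theta> / 2 \<or> 1 - \<theta> / 2 \<le> x" if "0 \<le> x" "x \<le> 1" for x
  proof (cases "x \<le> 1/2")
    case True
    have "cos (pi * \<theta>) \<le> cos (2 * pi * x) \<longleftrightarrow> 2 * pi * x \<le> pi * \<theta>"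
      by (rule cos_mono_le_eq) (use th that True in \<open>auto simp: mult_le_cancel_left1\<close>)
    also have "\<dots> \<longleftrightarrow> pi * (2 * x) \<le> pi * \<theta>" by (simp add: mult.assoc)
    also have "\<dots> \<longleftrightarrow> 2 * x \<le> \<theta>" by (rule mult_le_cancel_left_pos[OF pi_gt_zero])
    also have "\<dots> \<longleftrightarrow> x \<le> \<theta> / 2" by (simp add: mult.commute)
    finally show ?thesis using True th unfolding \<Omega>_def by auto
  next
    case False
    have "cos (2 * pi * x) = cos (2 * pi * (1 - x))"
      using cos_2pi_minus[of "2 * pi * x"] by (simp add: algebra_simps)
    moreover have "cos (pi * \<theta>) \<le> cos (2 * pi * (1 - x)) \<longleftrightarrow> 2 * pi * (1 - x) \<le> pi * \<theta>"
      by (rule cos_mono_le_eq) (use th that False in \<open>auto simp: mult_le_cancel_left1\<close>)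
    moreover have "2 * pi * (1 - x) \<le> pi * \<theta> \<longleftrightarrow> 1 - \<theta> / 2 \<le> x"
    proof -
      have "2 * pi * (1 - x) \<le> pi * \<theta> \<longleftrightarrow> pi * (2 * (1 - x)) \<le> pi * \<theta>" by (simp add: mult.assoc)
      also have "\<dots> \<longleftrightarrow> 2 * (1 - x) \<le> \<theta>" by (rule mult_le_cancel_left_pos[OF pi_gt_zero])
      also have "\<dots> \<longleftrightarrow> 1 - \<theta> / 2 \<le> x" by argo
      finally show ?thesis .
    qed
    ultimately show ?thesis using False th unfolding \<Omega>_def by auto
  qed
  have seq: "\<Omega> \<inter> {0..1} = {0..\<theta>/2} \<union> {1 - \<theta>/2..1}"
    using key th by auto
  have "measure lebesgue ({0..\<theta>/2} \<union> {1 - \<theta>/2..1}) = measure lebesgue {0..\<theta>/2} + measure lebesgue {1 - \<theta>/2..1}"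
  proof (rule measure_Union)
    show "emeasure lebesgue {0..\<theta>/2} \<noteq> \<infinity>" "emeasure lebesgue {1 - \<theta>/2..1} \<noteq> \<infinity>"
      using lmeasurable_compact[of "{0..\<theta>/2}"] lmeasurable_compact[of "{1 - \<theta>/2..1}"]
      by (auto simp: fmeasurable_def)
    show "{0..\<theta>/2} \<inter> {1 - \<theta>/2..1} = {}" using th by auto
  qed auto
  also have "\<dots> = \<theta>" using th by (simp add: meas_Icc)
  finally have meas: "measure lebesgue (\<Omega> \<inter> {0..1}) = \<theta>" using seq by simp
  have "admissible1D \<theta> (\<lambda>x. 0) (\<lambda>x. 0) (\<lambda>x. 0) (\<lambda>x. 0) (\<lambda>x. 0) \<Omega>"
    unfolding admissible1D_def torus_closed_def using H0 cl per meas by auto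
  then show ?thesis by blast
qed

theorem theorem1:
  shows "\<exists>K1>0. \<forall>\<alpha>m \<theta> h \<alpha>s \<eta> :: real.
     \<alpha>m > 0 \<longrightarrow> 0 < \<theta> \<longrightarrow> \<theta> < 1 \<longrightarrow> h > 0 \<longrightarrow> \<alpha>s > 0 \<longrightarrow> \<eta> > 0 \<longrightarrow>
     minE1D \<alpha>m h \<alpha>s \<eta> \<theta> \<ge>
       K1 * min (\<alpha>m * \<eta>^2 * \<theta>^2)
                (\<alpha>s powr (2/3) * \<eta> powr (5/3) * \<theta> powr (5/3) / (1 - \<theta>) powr (1/3)) * h"
proof (rule exI[where x="1/1024"], intro conjI allI impI)
  show "(0::real) < 1/1024" by simp
  fix \<alpha>m \<theta> h \<alpha>s \<eta> :: real
  assume am: "\<alpha>m > 0" and th0: "0 < \<theta>" and th1: "\<theta> < 1" and h: "h > 0" and as: "\<alpha>s > 0"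
    and eta: "\<eta> > 0"
  show "minE1D \<alpha>m h \<alpha>s \<eta> \<theta> \<ge>
       1/1024 * min (\<alpha>m * \<eta>^2 * \<theta>^2)
                (\<alpha>s powr (2/3) * \<eta> powr (5/3) * \<theta> powr (5/3) / (1 - \<theta>) powr (1/3)) * h"
    unfolding minE1D_def
  proof (rule cInf_greatest)
    show "{energy1D \<alpha>m h \<alpha>s \<eta> w wx ux uxx \<Omega> | w wx u ux uxx \<Omega>.
            admissible1D \<theta> w wx u ux uxx \<Omega>} \<noteq> {}"
      using exists_adm[OF th0 th1] by blast
  next
    fix x assume "x \<in> {energy1D \<alpha>m h \<alpha>s \<eta> w wx ux uxx \<Omega> | w wx u ux uxx \<Omega>.
            admissible1D \<theta> w wx u ux uxx \<Omega>}"
    then obtain w wx u ux uxx \<Omega> where x: "x = energy1D \<alpha>m h \<alpha>s \<eta> w wx ux uxx \<Omega>"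
      and a: "admissible1D \<theta> w wx u ux uxx \<Omega>" by blast
    interpret adm \<theta> \<eta> w wx u ux uxx \<Omega> using a th0 th1 eta by unfold_locales
    show "1/1024 * min (\<alpha>m * \<eta>^2 * \<theta>^2)
                (\<alpha>s powr (2/3) * \<eta> powr (5/3) * \<theta> powr (5/3) / (1 - \<theta>) powr (1/3)) * h \<le> x"
      using main_bound[OF am h as] x by simp
  qed
qed

end
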